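(* Let $Y,Y'$ be unbounded connected graphs with $Y'$ narrow. Suppose there are a constant $C\ge1$ and a metrically proper injective map $f:V(Y)\to V(Y')$ with $d_{Y'}(f(x),f(y))\le C\,d_Y(x,y)+C$ for all vertices $x,y$ of $Y$. Then $Y$ is narrow.
   Context: $V(Y)$ is the vertex set and $d_Y$ the path metric (edges of length 1). A map is metrically proper if preimages of bounded sets are bounded. A vertex subset $Z$ is $\mu$-coarsely connected if any two points of $Z$ are joined by a chain in $Z$ with consecutive distances at most $\mu$. An unbounded connected graph $Y$ is narrow if for each $\mu\ge1$ there is $L(\mu)\ge 1$ such that any $L(\mu)+1$ unbounded $\mu$-coarsely connected vertex subsets of $Y$ include two that intersect. *)

theory Defs
  imports Main "HOL-Library.Extended_Nat"
begin

definition is_graph :: "'a set \<Rightarrow> ('a \<Rightarrow> 'a \<Rightarrow> bool) \<Rightarrow> bool" where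
  "is_graph V E \<longleftrightarrow> (\<forall>x y. E x y \<longrightarrow> x \<in> V \<and> y \<in> V \<and> E y x \<and> x \<noteq> y)"

definition is_walk :: "'a set \<Rightarrow> ('a \<Rightarrow> 'a \<Rightarrow> bool) \<Rightarrow> 'a list \<Rightarrow> bool" where
  "is_walk V E xs \<longleftrightarrow> xs \<noteq> [] \<and> set xs \<subseteq> V \<and>
     (\<forall>i. Suc i < length xs \<longrightarrow> E (xs ! i) (xs ! Suc i))"

definition graph_connected :: "'a set \<Rightarrow> ('a \<Rightarrow> 'a \<Rightarrow> bool) \<Rightarrow> bool" where
  "graph_connected V E \<longleftrightarrow> V \<noteq> {} \<and>
     (\<forall>x\<in>V. \<forall>y\<in>V. \<exists>xs. is_walk V E xs \<and> hd xs = x \<and> last xs = y)"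

text \<open>Path metric (edges of length 1): the least number of edges of a walk
from x to y (meaningful for connected graphs).\<close>

definition gdist :: "'a set \<Rightarrow> ('a \<Rightarrow> 'a \<Rightarrow> bool) \<Rightarrow> 'a \<Rightarrow> 'a \<Rightarrow> nat" where
  "gdist V E x y = (LEAST n. \<exists>xs. is_walk V E xs \<and> hd xs = x \<and> last xs = y \<and> length xs = Suc n)"

definition gbounded :: "'a set \<Rightarrow> ('a \<Rightarrow> 'a \<Rightarrow> bool) \<Rightarrow> 'a set \<Rightarrow> bool" where
  "gbounded V E Z \<longleftrightarrow> (\<exists>R::nat. \<forall>z\<in>Z. \<forall>w\<in>Z. gdist V E z w \<le> R)"

definition graph_unbounded :: "'a set \<Rightarrow> ('a \<Rightarrow> 'a \<Rightarrow> bool) \<Rightarrow> bool" where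
  "graph_unbounded V E \<longleftrightarrow> \<not> gbounded V E V"

definition coarsely_connected :: "'a set \<Rightarrow> ('a \<Rightarrow> 'a \<Rightarrow> bool) \<Rightarrow> real \<Rightarrow> 'a set \<Rightarrow> bool" where
  "coarsely_connected V E \<mu> Z \<longleftrightarrow> Z \<subseteq> V \<and>
     (\<forall>x\<in>Z. \<forall>y\<in>Z. \<exists>zs. zs \<noteq> [] \<and> set zs \<subseteq> Z \<and> hd zs = x \<and> last zs = y \<and>
        (\<forall>i. Suc i < length zs \<longrightarrow> real (gdist V E (zs ! i) (zs ! Suc i)) \<le> \<mu>))"

definition narrow :: "'a set \<Rightarrow> ('a \<Rightarrow> 'a \<Rightarrow> bool) \<Rightarrow> bool" where
  "narrow V E \<longleftrightarrow> (\<forall>\<mu>::real. \<mu> \<ge> 1 \<longrightarrow> (\<exists>L::nat. L \<ge> 1 \<and>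
     (\<forall>S :: nat \<Rightarrow> 'a set.
        (\<forall>i\<le>L. \<not> gbounded V E (S i) \<and> coarsely_connected V E \<mu> (S i)) \<longrightarrow>
        (\<exists>i\<le>L. \<exists>j\<le>L. i \<noteq> j \<and> S i \<inter> S j \<noteq> {}))))"

definition metrically_proper ::
  "'a set \<Rightarrow> ('a \<Rightarrow> 'a \<Rightarrow> bool) \<Rightarrow> 'b set \<Rightarrow> ('b \<Rightarrow> 'b \<Rightarrow> bool) \<Rightarrow> ('a \<Rightarrow> 'b) \<Rightarrow> bool" where
  "metrically_proper V E V' E' f \<longleftrightarrow>
     (\<forall>B. B \<subseteq> V' \<longrightarrow> gbounded V' E' B \<longrightarrow> gbounded V E {x\<in>V. f x \<in> B})"

end

theory Submission
  imports Defs
begin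

theorem mainTheorem9:
  fixes V :: "'a set" and E :: "'a \<Rightarrow> 'a \<Rightarrow> bool"
    and V' :: "'b set" and E' :: "'b \<Rightarrow> 'b \<Rightarrow> bool"
    and f :: "'a \<Rightarrow> 'b" and C :: real
  assumes "is_graph V E" and "graph_connected V E" and "graph_unbounded V E"
    and "is_graph V' E'" and "graph_connected V' E'" and "graph_unbounded V' E'"
    and "narrow V' E'"
    and "C \<ge> 1"
    and "f ` V \<subseteq> V'" and "inj_on f V"
    and "metrically_proper V E V' E' f"
    and "\<forall>x\<in>V. \<forall>y\<in>V. real (gdist V' E' (f x) (f y)) \<le> C * real (gdist V E x y) + C"
  shows "narrow V E"
  unfolding narrow_def
proof (intro allI impI)
  fix \<mu> :: real assume mu: "\<mu> \<ge> 1"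
  define \<mu>' where "\<mu>' = C * \<mu> + C"
  have mu': "\<mu>' \<ge> 1" using mu assms(8) unfolding \<mu>'_def
    by (smt (verit) mult_nonneg_nonneg)
  obtain L :: nat where L1: "L \<ge> 1" and LP: "\<And>S. (\<forall>i\<le>L. \<not> gbounded V' E' (S i) \<and> coarsely_connected V' E' \<mu>' (S i)) \<Longrightarrow>
        (\<exists>i\<le>L. \<exists>j\<le>L. i \<noteq> j \<and> S i \<inter> S j \<noteq> {})"
  proof -
    obtain L :: nat where "L \<ge> 1" "\<forall>S. (\<forall>i\<le>L. \<not> gbounded V' E' (S i) \<and> coarsely_connected V' E' \<mu>' (S i)) \<longrightarrow>
        (\<exists>i\<le>L. \<exists>j\<le>L. i \<noteq> j \<and> S i \<inter> S j \<noteq> {})"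
      using assms(7) mu' unfolding narrow_def by meson
    then show ?thesis using that by blast
  qed
  show "\<exists>L::nat. L \<ge> 1 \<and>
     (\<forall>S :: nat \<Rightarrow> 'a set.
        (\<forall>i\<le>L. \<not> gbounded V E (S i) \<and> coarsely_connected V E \<mu> (S i)) \<longrightarrow>
        (\<exists>i\<le>L. \<exists>j\<le>L. i \<noteq> j \<and> S i \<inter> S j \<noteq> {}))"
  proof (rule exI[of _ L], intro conjI allI impI)
    show "L \<ge> 1" by fact
    fix S :: "nat \<Rightarrow> 'a set"
    assume H: "\<forall>i\<le>L. \<not> gbounded V E (S i) \<and> coarsely_connected V E \<mu> (S i)"
    have "\<forall>i\<le>L. \<not> gbounded V' E' (f ` S i) \<and> coarsely_connected V' E' \<mu>' (f ` S i)"
    proof (intro allI impI conjI)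
      fix i assume i: "i \<le> L"
      have SV: "S i \<subseteq> V" using H i unfolding coarsely_connected_def by blast
      have cc: "coarsely_connected V E \<mu> (S i)" using H i by blast
      show "\<not> gbounded V' E' (f ` S i)"
      proof
        assume b: "gbounded V' E' (f ` S i)"
        have "f ` S i \<subseteq> V'" using SV assms(9) by blast
        then have "gbounded V E {x\<in>V. f x \<in> f ` S i}"
          using b assms(11) unfolding metrically_proper_def by blast
        moreover have "S i \<subseteq> {x\<in>V. f x \<in> f ` S i}" using SV by blast
        ultimately have "gbounded V E (S i)" unfolding gbounded_def by blast
        then show False using H i by blast
      qed
      show "coarsely_connected V' E' \<mu>' (f ` S i)"
        unfolding coarsely_connected_def
      proof (intro conjI ballI)
        show "f ` S i \<subseteq> V'" using SV assms(9) by blast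
        fix a b assume a: "a \<in> f ` S i" and b: "b \<in> f ` S i"
        then obtain x y where x: "x \<in> S i" "a = f x" and y: "y \<in> S i" "b = f y" by blast
        then obtain zs where zs: "zs \<noteq> []" "set zs \<subseteq> S i" "hd zs = x" "last zs = y"
          "\<forall>k. Suc k < length zs \<longrightarrow> real (gdist V E (zs ! k) (zs ! Suc k)) \<le> \<mu>"
          using cc unfolding coarsely_connected_def by blast
        show "\<exists>ws. ws \<noteq> [] \<and> set ws \<subseteq> f ` S i \<and> hd ws = a \<and> last ws = b \<and>
          (\<forall>k. Suc k < length ws \<longrightarrow> real (gdist V' E' (ws ! k) (ws ! Suc k)) \<le> \<mu>')"
        proof (intro exI[of _ "map f zs"] conjI allI impI)
          show "map f zs \<noteq> []" using zs by simp
          show "set (map f zs) \<subseteq> f ` S i" using zs by auto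
          show "hd (map f zs) = a" using zs x by (simp add: hd_map)
          show "last (map f zs) = b" using zs y by (simp add: last_map)
          fix k assume k: "Suc k < length (map f zs)"
          have k1: "k < length zs" "Suc k < length zs" using k by auto
          have in1: "zs ! k \<in> V" using zs(2) SV nth_mem[OF k1(1)] by blast
          have in2: "zs ! Suc k \<in> V" using zs(2) SV nth_mem[OF k1(2)] by blast
          have d: "real (gdist V E (zs ! k) (zs ! Suc k)) \<le> \<mu>" using zs(5) k by simp
          have "real (gdist V' E' (f (zs ! k)) (f (zs ! Suc k))) \<le> C * real (gdist V E (zs ! k) (zs ! Suc k)) + C"
            using assms(12) in1 in2 by blast
          also have "\<dots> \<le> \<mu>'" unfolding \<mu>'_def using d assms(8)
            by (simp add: mult_left_mono)
          finally show "real (gdist V' E' (map f zs ! k) (map f zs ! Suc k)) \<le> \<mu>'"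
            using k by simp
        qed
      qed
    qed
    then obtain i j where ij: "i \<le> L" "j \<le> L" "i \<noteq> j" "f ` S i \<inter> f ` S j \<noteq> {}"
      using LP[of "\<lambda>i. f ` S i"] by blast
    then obtain x y where "x \<in> S i" "y \<in> S j" "f x = f y" by blast
    moreover have "S i \<subseteq> V" "S j \<subseteq> V" using H ij unfolding coarsely_connected_def by blast+
    ultimately have "x = y" using assms(10) unfolding inj_on_def by blast
    then show "\<exists>i\<le>L. \<exists>j\<le>L. i \<noteq> j \<and> S i \<inter> S j \<noteq> {}"
      using ij \<open>x \<in> S i\<close> \<open>y \<in> S j\<close> by blast
  qed
qed

end
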